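(* Let $W$ be an $\epsilon$-spectral cluster of $G_0$, let $V\subseteq V_0$ be closed in $G_0$ and dominate $W$, let $G=G_0|V$, and let $S\subseteq V$ be closed in $G$ with $\mathrm{vol}_{G_0}(W\setminus S)\le\frac23\mathrm{vol}_{G_0}(W)$. Perform the following "big expansion" of $S$ inside $G$: (1) a grab; (2) local improvements of $S$; (3) a grab; (4) local improvements of $S$. Here a grab replaces $S$ by $S\cup T$, where $T$ is the set of all $v\in V\setminus S$ with $d_G(v)>0$ having at least $\frac16 d_G(v)$ of their $G$-neighbors in $S$ (computed before the grab); local improvements of $S$ means: while there exists $v\in V\setminus S$ with $d_G(v)>0$ and at least $\frac59 d_G(v)$ of its $G$-neighbors in $S$, add $v$ to $S$. Then the resulting set $S$ dominates $W$.
   Context: Standing setting: $G_0=(V_0,E_0)$ is a finite simple undirected graph and $0<\epsilon\le 1/2000000$. For a graph $H$, $d_H(v)$ is the degree, $\mathrm{vol}_H(S)=\sum_{v\in S}d_H(v)$, $E(S,T)$ is the set of edges with one endpoint in $S$ and the other in $T$, $\partial_H S=E(S,V(H)\setminus S)$. For $V\subseteq V_0$, $G_0|V$ is the induced subgraph. An $\epsilon$-spectral cluster of $G_0$ is $W\subseteq V_0$ with $\mathrm{vol}_{G_0}(W)>0$, $|\partial_{G_0}W|\le\epsilon\,\mathrm{vol}_{G_0}(W)$, and for every $A\subseteq W$ with $r=\mathrm{vol}_{G_0}(A)/\mathrm{vol}_{G_0}(W)$, $|E(A,W\setminus A)|\ge(r(1-r)-\epsilon)\mathrm{vol}_{G_0}(W)$.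 A set $A\subseteq V(H)$ is closed in $H$ if no $v\in V(H)\setminus A$ with $d_H(v)>0$ has at least $\frac59 d_H(v)$ of its $H$-neighbors in $A$. A set $A\subseteq V_0$ dominates $W$ if $\mathrm{vol}_{G_0}(W\cap A)>(1-3\epsilon)\mathrm{vol}_{G_0}(W)$. *)

theory Defs
  imports Complex_Main
begin

definition simple_graph :: "'a set \<Rightarrow> ('a \<Rightarrow> 'a \<Rightarrow> bool) \<Rightarrow> bool" where
  "simple_graph V E \<longleftrightarrow> finite V \<and> (\<forall>u v. E u v \<longrightarrow> E v u)
     \<and> (\<forall>v. \<not> E v v) \<and> (\<forall>u v. E u v \<longrightarrow> u \<in> V \<and> v \<in> V)"

definition induced :: "('a \<Rightarrow> 'a \<Rightarrow> bool) \<Rightarrow> 'a set \<Rightarrow> 'a \<Rightarrow> 'a \<Rightarrow> bool" where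
  "induced E V = (\<lambda>u v. E u v \<and> u \<in> V \<and> v \<in> V)"

definition nbrs :: "'a set \<Rightarrow> ('a \<Rightarrow> 'a \<Rightarrow> bool) \<Rightarrow> 'a \<Rightarrow> 'a set" where
  "nbrs V E v = {u \<in> V. E v u}"

definition deg :: "'a set \<Rightarrow> ('a \<Rightarrow> 'a \<Rightarrow> bool) \<Rightarrow> 'a \<Rightarrow> nat" where
  "deg V E v = card (nbrs V E v)"

definition vol :: "'a set \<Rightarrow> ('a \<Rightarrow> 'a \<Rightarrow> bool) \<Rightarrow> 'a set \<Rightarrow> real" where
  "vol V E S = (\<Sum>v\<in>S. real (deg V E v))"

definition edges_between :: "('a \<Rightarrow> 'a \<Rightarrow> bool) \<Rightarrow> 'a set \<Rightarrow> 'a set \<Rightarrow> 'a set set" where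
  "edges_between E S T = {{u, v} | u v. u \<in> S \<and> v \<in> T \<and> E u v}"

definition spectral_cluster ::
  "'a set \<Rightarrow> ('a \<Rightarrow> 'a \<Rightarrow> bool) \<Rightarrow> real \<Rightarrow> 'a set \<Rightarrow> bool" where
  "spectral_cluster V0 E eps W \<longleftrightarrow> W \<subseteq> V0 \<and> vol V0 E W > 0
     \<and> real (card (edges_between E W (V0 - W))) \<le> eps * vol V0 E W
     \<and> (\<forall>A \<subseteq> W. let r = vol V0 E A / vol V0 E W in
          real (card (edges_between E A (W - A))) \<ge> (r * (1 - r) - eps) * vol V0 E W)"

definition closed_in :: "'a set \<Rightarrow> ('a \<Rightarrow> 'a \<Rightarrow> bool) \<Rightarrow> 'a set \<Rightarrow> bool" where
  "closed_in V E A \<longleftrightarrow> A \<subseteq> V \<and> (\<forall>v \<in> V - A. deg V E v > 0 \<longrightarrow>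
      \<not> (real (card (nbrs V E v \<inter> A)) \<ge> 5/9 * real (deg V E v)))"

definition dominates :: "'a set \<Rightarrow> ('a \<Rightarrow> 'a \<Rightarrow> bool) \<Rightarrow> real \<Rightarrow> 'a set \<Rightarrow> 'a set \<Rightarrow> bool" where
  "dominates V0 E eps A W \<longleftrightarrow> vol V0 E (W \<inter> A) > (1 - 3 * eps) * vol V0 E W"

definition grab :: "'a set \<Rightarrow> ('a \<Rightarrow> 'a \<Rightarrow> bool) \<Rightarrow> 'a set \<Rightarrow> 'a set" where
  "grab V E S = S \<union> {v \<in> V - S. deg V E v > 0 \<and>
      real (card (nbrs V E v \<inter> S)) \<ge> 1/6 * real (deg V E v)}"

definition improve_step :: "'a set \<Rightarrow> ('a \<Rightarrow> 'a \<Rightarrow> bool) \<Rightarrow> 'a set \<Rightarrow> 'a set \<Rightarrow> bool" where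
  "improve_step V E S S' \<longleftrightarrow> (\<exists>v \<in> V - S. deg V E v > 0 \<and>
      real (card (nbrs V E v \<inter> S)) \<ge> 5/9 * real (deg V E v) \<and> S' = insert v S)"

definition local_improvements :: "'a set \<Rightarrow> ('a \<Rightarrow> 'a \<Rightarrow> bool) \<Rightarrow> 'a set \<Rightarrow> 'a set \<Rightarrow> bool" where
  "local_improvements V E S S' \<longleftrightarrow> (improve_step V E)\<^sup>*\<^sup>* S S' \<and> \<not> (\<exists>S''. improve_step V E S' S'')"

end

theory Submission
  imports Defs
begin


lemma grab_sup: "S \<subseteq> grab V E S" by (auto simp: grab_def)
lemma grab_sub: "S \<subseteq> V \<Longrightarrow> grab V E S \<subseteq> V" by (auto simp: grab_def)

lemma improve_rt: "(improve_step V E)\<^sup>*\<^sup>* S S' \<Longrightarrow> S \<subseteq> S' \<and> (S \<subseteq> V \<longrightarrow> S' \<subseteq> V)"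
  by (induction rule: rtranclp_induct) (auto simp: improve_step_def)

lemma li_closed:
  assumes a: "local_improvements V E S S'" and sub: "S' \<subseteq> V"
  shows "closed_in V E S'"
  unfolding closed_in_def
proof (intro conjI sub ballI impI notI)
  fix v assume v: "v \<in> V - S'" "0 < deg V E v" "5/9 * real (deg V E v) \<le> real (card (nbrs V E v \<inter> S'))"
  then have "improve_step V E S' (insert v S')" unfolding improve_step_def by blast
  then show False using a unfolding local_improvements_def by blast
qed

lemma edge_bound:
  assumes g: "simple_graph V0 E" and fD: "finite D"
  shows "real (card (edges_between E A D)) \<le> (\<Sum>v\<in>D. real (card (nbrs V0 E v \<inter> A)))"
proof -
  have fV: "finite V0" using g by (simp add: simple_graph_def)
  have sub: "edges_between E A D \<subseteq> (\<lambda>(v,u). {u,v}) ` (SIGMA v:D. nbrs V0 E v \<inter> A)"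
  proof
    fix e assume "e \<in> edges_between E A D"
    then obtain u v where "e = {u,v}" "u \<in> A" "v \<in> D" "E u v" by (auto simp: edges_between_def)
    moreover have "E v u" "u \<in> V0" using g \<open>E u v\<close> by (auto simp: simple_graph_def)
    ultimately show "e \<in> (\<lambda>(v,u). {u,v}) ` (SIGMA v:D. nbrs V0 E v \<inter> A)"
      by (auto simp: nbrs_def image_iff intro!: bexI[of _ "(v,u)"])
  qed
  have fin: "finite (SIGMA v:D. nbrs V0 E v \<inter> A)"
    using fD fV by (auto simp: nbrs_def)
  have "card (edges_between E A D) \<le> card ((\<lambda>(v,u). {u,v}) ` (SIGMA v:D. nbrs V0 E v \<inter> A))"
    by (rule card_mono[OF finite_imageI[OF fin] sub])
  also have "\<dots> \<le> card (SIGMA v:D. nbrs V0 E v \<inter> A)" by (rule card_image_le[OF fin])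
  also have "\<dots> = (\<Sum>v\<in>D. card (nbrs V0 E v \<inter> A))"
    using fD fV by (subst card_SigmaI) (auto simp: nbrs_def)
  finally show ?thesis by (metis of_nat_le_iff of_nat_sum)
qed

lemma nbrs_induced: "v \<in> V \<Longrightarrow> V \<subseteq> V0 \<Longrightarrow> nbrs V (induced E V) v = nbrs V0 E v \<inter> V"
  by (auto simp: nbrs_def induced_def)

lemma fin_nbrs: "simple_graph V0 E \<Longrightarrow> finite (nbrs V0 E v)"
  by (simp add: simple_graph_def nbrs_def)

lemma deg_induced_le: "simple_graph V0 E \<Longrightarrow> V \<subseteq> V0 \<Longrightarrow> v \<in> V \<Longrightarrow> deg V (induced E V) v \<le> deg V0 E v"
  unfolding deg_def by (simp add: nbrs_induced card_mono fin_nbrs)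

lemma vtx_bound:
  assumes g: "simple_graph V0 E" and VV: "V \<subseteq> V0" and Vc: "closed_in V0 E V"
    and Sc: "closed_in V (induced E V) S'" and AS: "A \<subseteq> S'" and v: "v \<in> V0 - S'"
  shows "real (card (nbrs V0 E v \<inter> A)) \<le> 5/9 * real (deg V0 E v)"
proof (cases "v \<in> V")
  case True
  have fin: "finite (nbrs V (induced E V) v)" using fin_nbrs[OF g] True VV by (simp add: nbrs_induced)
  have le: "card (nbrs V0 E v \<inter> A) \<le> card (nbrs V (induced E V) v \<inter> S')"
    using AS Sc True VV fin by (intro card_mono) (auto simp: nbrs_induced closed_in_def)
  have dl: "deg V (induced E V) v \<le> deg V0 E v" by (rule deg_induced_le[OF g VV True])
  show ?thesis
  proof (cases "deg V (induced E V) v > 0")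
    case True
    then have "\<not> real (card (nbrs V (induced E V) v \<inter> S')) \<ge> 5/9 * real (deg V (induced E V) v)"
      using Sc v \<open>v \<in> V\<close> unfolding closed_in_def by blast
    then show ?thesis using of_nat_mono[OF le, where ?'a=real] of_nat_mono[OF dl, where ?'a=real] by linarith
  next
    case False
    then have "nbrs V (induced E V) v = {}" using fin by (simp add: deg_def)
    then show ?thesis using le by simp
  qed
next
  case False
  have le: "card (nbrs V0 E v \<inter> A) \<le> card (nbrs V0 E v \<inter> V)"
    using AS Sc fin_nbrs[OF g] by (intro card_mono) (auto simp: closed_in_def)
  show ?thesis
  proof (cases "deg V0 E v > 0")
    case True
    then have "\<not> real (card (nbrs V0 E v \<inter> V)) \<ge> 5/9 * real (deg V0 E v)"
      using Vc v False unfolding closed_in_def by blast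
    then show ?thesis using of_nat_mono[OF le, where ?'a=real] by linarith
  next
    case False
    then have "nbrs V0 E v = {}" using fin_nbrs[OF g] by (simp add: deg_def)
    then show ?thesis by simp
  qed
qed

lemma grab_bound:
  assumes g: "simple_graph V0 E" and VV: "V \<subseteq> V0" and AS: "A \<subseteq> S" and SV: "S \<subseteq> V"
    and v: "v \<in> V" "v \<notin> grab V (induced E V) S"
  shows "real (card (nbrs V0 E v \<inter> A)) \<le> 1/6 * real (deg V0 E v)"
proof -
  have fin: "finite (nbrs V (induced E V) v)" using fin_nbrs[OF g] v VV by (simp add: nbrs_induced)
  have le: "card (nbrs V0 E v \<inter> A) \<le> card (nbrs V (induced E V) v \<inter> S)"
    using AS SV v VV fin by (intro card_mono) (auto simp: nbrs_induced)
  have dl: "deg V (induced E V) v \<le> deg V0 E v" by (rule deg_induced_le[OF g VV v(1)])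
  have vS: "v \<notin> S" using v(2) grab_sup[of S V "induced E V"] by blast
  show ?thesis
  proof (cases "deg V (induced E V) v > 0")
    case True
    have "\<not> real (card (nbrs V (induced E V) v \<inter> S)) \<ge> 1/6 * real (deg V (induced E V) v)"
    proof (rule notI)
      assume h: "real (card (nbrs V (induced E V) v \<inter> S)) \<ge> 1/6 * real (deg V (induced E V) v)"
      have "v \<in> grab V (induced E V) S" unfolding grab_def using h True v(1) vS by simp
      then show False using v(2) by simp
    qed
    then show ?thesis using of_nat_mono[OF le, where ?'a=real] of_nat_mono[OF dl, where ?'a=real] by linarith
  next
    case False
    then have "nbrs V (induced E V) v = {}" using fin by (simp add: deg_def)
    then show ?thesis using le by simp
  qed
qed

lemma cluster_ineq:
  assumes g: "simple_graph V0 E" and cl: "spectral_cluster V0 E eps W"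
  shows "((1 - vol V0 E (W - S') / vol V0 E W) * (vol V0 E (W - S') / vol V0 E W) - eps) * vol V0 E W
     \<le> (\<Sum>v\<in>W - S'. real (card (nbrs V0 E v \<inter> (W \<inter> S'))))"
proof -
  have fV: "finite V0" using g by (simp add: simple_graph_def)
  have WV: "W \<subseteq> V0" and pos: "vol V0 E W > 0" using cl unfolding spectral_cluster_def by simp_all
  have fW: "finite W" using fV WV finite_subset by blast
  have split: "vol V0 E W = vol V0 E (W \<inter> S') + vol V0 E (W - S')"
    unfolding vol_def using fW by (rule sum.Int_Diff)
  have r: "vol V0 E (W \<inter> S') / vol V0 E W = 1 - vol V0 E (W - S') / vol V0 E W"
    using pos split by (simp add: field_simps)
  have eq: "W - W \<inter> S' = W - S'" by blast
  have e: "1 - (1 - vol V0 E (W - S') / vol V0 E W) = vol V0 E (W - S') / vol V0 E W" by simp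
  have "real (card (edges_between E (W \<inter> S') (W - S'))) \<ge>
     ((1 - vol V0 E (W - S') / vol V0 E W) * (vol V0 E (W - S') / vol V0 E W) - eps) * vol V0 E W"
  proof -
    have "\<forall>A \<subseteq> W. real (card (edges_between E A (W - A))) \<ge>
        (vol V0 E A / vol V0 E W * (1 - vol V0 E A / vol V0 E W) - eps) * vol V0 E W"
      using cl unfolding spectral_cluster_def Let_def by blast
    then have "real (card (edges_between E (W \<inter> S') (W - W \<inter> S'))) \<ge>
        (vol V0 E (W \<inter> S') / vol V0 E W * (1 - vol V0 E (W \<inter> S') / vol V0 E W) - eps) * vol V0 E W"
      by blast
    then show ?thesis unfolding eq r e .
  qed
  moreover have "real (card (edges_between E (W \<inter> S') (W - S'))) \<le> (\<Sum>v\<in>W - S'. real (card (nbrs V0 E v \<inter> (W \<inter> S'))))"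
    by (rule edge_bound[OF g finite_Diff[OF fW]])
  ultimately show ?thesis by (rule order_trans)
qed


lemma arith1:
  fixes x b e :: real
  assumes "0 \<le> x" "x \<le> 2/3" "(1-x)*x - e \<le> 5/9*x - 7/18*b"
  shows "b \<le> 18/7*(4/27+e)"
proof -
  have h: "(x-2/3)*(x+2/9) \<le> 0" using assms by (intro mult_nonpos_nonneg) auto
  have h2: "(x-2/3)*(x+2/9) = x*x - 4/9*x - 4/27" by algebra
  have h3: "(1-x)*x = x - x*x" by (simp add: algebra_simps)
  have k1: "x*x - 4/9*x - 4/27 \<le> 0" using h unfolding h2 .
  have k2: "x - x*x - e \<le> 5/9*x - 7/18*b" using assms(3) unfolding h3 .
  define y where "y = x*x"
  show ?thesis using k1 k2 unfolding y_def[symmetric] by (simp add: field_simps)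
qed

lemma arith2:
  fixes x e :: real
  assumes "0 < e" "e \<le> 1/2000000" "x \<le> 8/21 + 18/7*e + 3*e" "(1-x)*x - e \<le> 5/9*x"
  shows "x < 3*e"
proof (rule ccontr)
  assume "\<not> x < 3*e"
  then have a: "x \<ge> 3*e" by simp
  have b: "x \<le> 4/9 - 3*e" using assms by linarith
  have h: "(x - 3*e)*((4/9 - 3*e) - x) \<ge> 0" using a b by (intro mult_nonneg_nonneg) auto
  have h2: "(x - 3*e)*((4/9 - 3*e) - x) = 4/9*x - x*x - 4/3*e + 9*(e*e)" by algebra
  have h3: "(1-x)*x = x - x*x" by (simp add: algebra_simps)
  have h4: "e*e \<le> e*(1/2000000)" using assms by (intro mult_left_mono) auto
  have k1: "0 \<le> 4/9*x - x*x - 4/3*e + 9*(e*e)" using h unfolding h2 .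
  have k2: "x - x*x - e \<le> 5/9*x" using assms(4) unfolding h3 .
  define y where "y = x*x"
  define z where "z = e*e"
  show False using k1 k2 h4 assms(1,2) unfolding y_def[symmetric] z_def[symmetric] by (simp add: field_simps)
qed

theorem mainTheorem9:
  fixes V0 V W S S1 S2 S3 S4 :: "'a set" and E :: "'a \<Rightarrow> 'a \<Rightarrow> bool" and eps :: real
  assumes graph: "simple_graph V0 E"
    and eps: "0 < eps" "eps \<le> 1 / 2000000"
    and cluster: "spectral_cluster V0 E eps W"
    and V_sub: "V \<subseteq> V0"
    and V_closed: "closed_in V0 E V"
    and V_dom: "dominates V0 E eps V W"
    and S_closed: "closed_in V (induced E V) S"
    and S_vol: "vol V0 E (W - S) \<le> 2/3 * vol V0 E W"
    and step1: "S1 = grab V (induced E V) S"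
    and step2: "local_improvements V (induced E V) S1 S2"
    and step3: "S3 = grab V (induced E V) S2"
    and step4: "local_improvements V (induced E V) S3 S4"
  shows "dominates V0 E eps S4 W"
proof -
  have fV: "finite V0" using graph by (simp add: simple_graph_def)
  have WV: "W \<subseteq> V0" and pos: "vol V0 E W > 0" using cluster unfolding spectral_cluster_def by simp_all
  have fW: "finite W" using fV WV finite_subset by blast
  have SV: "S \<subseteq> V" using S_closed by (simp add: closed_in_def)
  have S1a: "S \<subseteq> S1" "S1 \<subseteq> V" using step1 grab_sup[of S V "induced E V"] grab_sub[OF SV] by auto
  have S2a: "S1 \<subseteq> S2" "S2 \<subseteq> V" using improve_rt[of V "induced E V" S1 S2] step2 S1a
    unfolding local_improvements_def by auto
  have S3a: "S2 \<subseteq> S3" "S3 \<subseteq> V" using step3 grab_sup[of S2 V "induced E V"] grab_sub[OF S2a(2)] by auto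
  have S4a: "S3 \<subseteq> S4" "S4 \<subseteq> V" using improve_rt[of V "induced E V" S3 S4] step4 S3a
    unfolding local_improvements_def by auto
  have S4c: "closed_in V (induced E V) S4" by (rule li_closed[OF step4 S4a(2)])
  have S14: "S1 \<subseteq> S4" using S2a S3a S4a by blast
  define B where "B = (W \<inter> V) - S1"
  define D where "D = W - S"
  define Wv where "Wv = vol V0 E W"
  have BD: "B \<subseteq> D" using S1a unfolding B_def D_def by blast
  have fD: "finite D" using fW unfolding D_def by simp
  have fB: "finite B" using fW unfolding B_def by simp
  have pv: "real (card (nbrs V0 E v \<inter> (W \<inter> S))) \<le> 5/9 * real (deg V0 E v) - (if v \<in> B then 7/18 * real (deg V0 E v) else 0)"
    if v: "v \<in> D" for v
  proof (cases "v \<in> B")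
    case True
    then have "v \<in> V" "v \<notin> grab V (induced E V) S" using step1 unfolding B_def by auto
    from grab_bound[OF graph V_sub _ SV this, of "W \<inter> S"]
    show ?thesis using True by simp
  next
    case False
    have "v \<in> V0 - S" using v WV unfolding D_def by blast
    from vtx_bound[OF graph V_sub V_closed S_closed _ this, of "W \<inter> S"]
    show ?thesis using False by simp
  qed
  have sum1: "(\<Sum>v\<in>D. real (card (nbrs V0 E v \<inter> (W \<inter> S)))) \<le> 5/9 * vol V0 E D - 7/18 * vol V0 E B"
  proof -
    have "(\<Sum>v\<in>D. real (card (nbrs V0 E v \<inter> (W \<inter> S)))) \<le>
       (\<Sum>v\<in>D. 5/9 * real (deg V0 E v) - (if v \<in> B then 7/18 * real (deg V0 E v) else 0))"
      by (rule sum_mono) (rule pv)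
    also have "\<dots> = 5/9 * vol V0 E D - (\<Sum>v\<in>D. (if v \<in> B then 7/18 * real (deg V0 E v) else 0))"
      by (simp add: sum_subtractf sum_distrib_left vol_def)
    also have "(\<Sum>v\<in>D. (if v \<in> B then 7/18 * real (deg V0 E v) else 0)) = (\<Sum>v\<in>D \<inter> B. 7/18 * real (deg V0 E v))"
      using sum.inter_restrict[OF fD, of "\<lambda>v. 7/18 * real (deg V0 E v)" B] by simp
    also have "D \<inter> B = B" using BD by blast
    also have "(\<Sum>v\<in>B. 7/18 * real (deg V0 E v)) = 7/18 * vol V0 E B"
      by (simp add: sum_distrib_left vol_def)
    finally show ?thesis .
  qed
  have Wpos: "Wv > 0" using pos unfolding Wv_def .
  have volnn: "vol V0 E X \<ge> 0" for X by (simp add: vol_def sum_nonneg)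
  define x where "x = vol V0 E D / Wv"
  define b where "b = vol V0 E B / Wv"
  have volD: "vol V0 E D = x * Wv" using Wpos unfolding x_def by simp
  have volB: "vol V0 E B = b * Wv" using Wpos unfolding b_def by simp
  have c1: "((1 - x) * x - eps) * Wv \<le> (\<Sum>v\<in>D. real (card (nbrs V0 E v \<inter> (W \<inter> S))))"
    using cluster_ineq[OF graph cluster, of S] unfolding D_def[symmetric] Wv_def[symmetric] x_def .
  have "((1 - x) * x - eps) * Wv \<le> (5/9 * x - 7/18 * b) * Wv"
    using c1 sum1 unfolding volD volB by (simp add: algebra_simps)
  then have i1: "(1 - x) * x - eps \<le> 5/9 * x - 7/18 * b" using Wpos by (rule mult_right_le_imp_le)
  have x0: "0 \<le> x" unfolding x_def using Wpos volnn by simp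
  have "x * Wv \<le> 2/3 * Wv" using S_vol unfolding volD[symmetric] D_def[symmetric] Wv_def[symmetric] .
  then have x1: "x \<le> 2/3" using Wpos by (rule mult_right_le_imp_le)
  have hb: "b \<le> 18/7*(4/27+eps)" by (rule arith1[OF x0 x1 i1])
  have sub: "W - S4 \<subseteq> B \<union> (W - V)" using S14 unfolding B_def by blast
  have disj: "B \<inter> (W - V) = {}" unfolding B_def by blast
  have "vol V0 E (W - S4) \<le> vol V0 E (B \<union> (W - V))"
    unfolding vol_def using fB fW sub by (intro sum_mono2) auto
  also have "\<dots> = vol V0 E B + vol V0 E (W - V)"
    unfolding vol_def using fB fW disj by (intro sum.union_disjoint) auto
  finally have v4: "vol V0 E (W - S4) \<le> vol V0 E B + vol V0 E (W - V)" .
  have splitV: "vol V0 E W = vol V0 E (W \<inter> V) + vol V0 E (W - V)"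
    unfolding vol_def using fW by (rule sum.Int_Diff)
  have "vol V0 E (W \<inter> V) > (1 - 3 * eps) * Wv" using V_dom unfolding dominates_def Wv_def .
  then have vWV: "vol V0 E (W - V) < 3 * eps * Wv" using splitV unfolding Wv_def by (simp add: algebra_simps)
  define x4 where "x4 = vol V0 E (W - S4) / Wv"
  have volD4: "vol V0 E (W - S4) = x4 * Wv" using Wpos unfolding x4_def by simp
  have "x4 * Wv \<le> (b + 3 * eps) * Wv" using v4 vWV unfolding volD4 volB by (simp add: algebra_simps)
  then have "x4 \<le> b + 3 * eps" using Wpos by (rule mult_right_le_imp_le)
  then have x4b: "x4 \<le> 8/21 + 18/7*eps + 3*eps" using hb by (simp add: field_simps)
  have pv4: "real (card (nbrs V0 E v \<inter> (W \<inter> S4))) \<le> 5/9 * real (deg V0 E v)" if v: "v \<in> W - S4" for v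
  proof -
    have "v \<in> V0 - S4" using v WV by blast
    from vtx_bound[OF graph V_sub V_closed S4c _ this, of "W \<inter> S4"] show ?thesis by simp
  qed
  have "(\<Sum>v\<in>W - S4. real (card (nbrs V0 E v \<inter> (W \<inter> S4)))) \<le> (\<Sum>v\<in>W - S4. 5/9 * real (deg V0 E v))"
    by (rule sum_mono) (rule pv4)
  also have "\<dots> = 5/9 * vol V0 E (W - S4)" by (simp add: sum_distrib_left vol_def)
  finally have sum4: "(\<Sum>v\<in>W - S4. real (card (nbrs V0 E v \<inter> (W \<inter> S4)))) \<le> 5/9 * vol V0 E (W - S4)" .
  have c4: "((1 - x4) * x4 - eps) * Wv \<le> (\<Sum>v\<in>W - S4. real (card (nbrs V0 E v \<inter> (W \<inter> S4))))"
    using cluster_ineq[OF graph cluster, of S4] unfolding Wv_def[symmetric] x4_def .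
  have "((1 - x4) * x4 - eps) * Wv \<le> (5/9 * x4) * Wv"
    using c4 sum4 unfolding volD4 by (simp add: algebra_simps)
  then have i4: "(1 - x4) * x4 - eps \<le> 5/9 * x4" using Wpos by (rule mult_right_le_imp_le)
  have x4s: "x4 < 3 * eps" by (rule arith2[OF eps x4b i4])
  have "x4 * Wv < 3 * eps * Wv" using x4s Wpos by (rule mult_strict_right_mono)
  have splitS: "vol V0 E W = vol V0 E (W \<inter> S4) + vol V0 E (W - S4)"
    unfolding vol_def using fW by (rule sum.Int_Diff)
  show ?thesis unfolding dominates_def using splitS \<open>x4 * Wv < 3 * eps * Wv\<close> volD4
    unfolding Wv_def by (simp add: algebra_simps)
qed

end
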